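(* In the standing setting, let $(\psi,\alpha)\in\mathcal{A}\times\mathcal{B}$ with lifting $\psi^\uparrow$. Then $(G,r)$, $(G,r')$, $(G,\widetilde r)$, $(G,\widetilde r')$ are set-theoretic non-degenerate solutions of the Yang--Baxter equation, where for $g,h\in G$: $$r(g,h)=\Big(\psi^\uparrow(g)\,h\,\psi^\uparrow(g)^{-1}\,\alpha(g,h),\ \psi^\uparrow(h)^{-1}\psi^\uparrow(g)\,h^{-1}\,\psi^\uparrow(g)^{-1}\,g\,\psi^\uparrow(g)\,h\,\psi^\uparrow(g)^{-1}\psi^\uparrow(h)\,\alpha(h^{-1},g)\Big);$$ $$r'(g,h)=\Big(g\,\psi^\uparrow(g)\,h\,\psi^\uparrow(g)^{-1}\,g^{-1}\,\alpha(g,h),\ \psi^\uparrow(h)^{-1}\,g\,\psi^\uparrow(h)\,\alpha(h^{-1},g)\Big);$$ $$\widetilde r(g,h)=\Big(\psi^\uparrow(g)^{-1}\,h\,\psi^\uparrow(g)\,\alpha(g^{-1},h),\ \psi^\uparrow(g)^{-1}\,h^{-1}\,\psi^\uparrow(g)\,g\,h\,\alpha(g,h)\Big);$$ $$\widetilde r'(g,h)=\Big(g\,h\,\psi^\uparrow(h)\,g^{-1}\,\psi^\uparrow(h)^{-1}\,\alpha(h,g^{-1}),\ \psi^\uparrow(h)\,g\,\psi^\uparrow(h)^{-1}\,\alpha(h,g)\Big).$$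
   Context: Standing setting: $(G,\cdot)$ is a group, $K$ is a subgroup of $G$ contained in the centre $Z(G)$, and $A$ is a subgroup with $K\le A\le G$ and $A/K$ abelian. Let $\mathcal{A}=\{\psi\in\operatorname{End}(G/K):\psi(G/K)\le A/K\}$. A lifting of $\psi\in\mathcal{A}$ is any set map $\psi^{\uparrow}:G\to A$ with $\psi^{\uparrow}(g)K=\psi(gK)$ for all $g\in G$. Let $\mathcal{B}$ be the set of maps $\alpha:G\times G\to K$ that are bilinear, i.e. $\alpha(gh,k)=\alpha(g,k)\alpha(h,k)$ and $\alpha(g,hk)=\alpha(g,h)\alpha(g,k)$, and satisfy $\alpha(k,g)=\alpha(g,k)=1$ for all $k\in K$, $g\in G$. A set-theoretic solution of the Yang--Baxter equation is a pair $(X,r)$ with $X\neq\emptyset$ and $r:X\times X\to X\times X$, $r(x,y)=(\sigma_x(y),\tau_y(x))$, a bijection satisfying $(r\times\mathrm{id}_X)(\mathrm{id}_X\times r)(r\times\mathrm{id}_X)=(\mathrm{id}_X\times r)(r\times\mathrm{id}_X)(\mathrm{id}_X\times r)$; it is non-degenerate if all $\sigma_x$ and $\tau_x$ are bijective. *)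

theory Defs
  imports "HOL-Algebra.Algebra"
begin

definition group_centre :: "('a, 'b) monoid_scheme \<Rightarrow> 'a set" where
  "group_centre G = {z \<in> carrier G. \<forall>g \<in> carrier G. z \<otimes>\<^bsub>G\<^esub> g = g \<otimes>\<^bsub>G\<^esub> z}"

text \<open>Set-theoretic solutions of the Yang--Baxter equation on a set S.
  For r(x,y) = (sigma_x(y), tau_y(x)) we have sigma_x(y) = fst (r (x,y)), tau_y(x) = snd (r (x,y)).\<close>
definition r12 :: "('a \<times> 'a \<Rightarrow> 'a \<times> 'a) \<Rightarrow> 'a \<times> 'a \<times> 'a \<Rightarrow> 'a \<times> 'a \<times> 'a" where
  "r12 r = (\<lambda>(x, y, z). (fst (r (x, y)), snd (r (x, y)), z))"

definition r23 :: "('a \<times> 'a \<Rightarrow> 'a \<times> 'a) \<Rightarrow> 'a \<times> 'a \<times> 'a \<Rightarrow> 'a \<times> 'a \<times> 'a" where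
  "r23 r = (\<lambda>(x, y, z). (x, fst (r (y, z)), snd (r (y, z))))"

definition YBE_solution :: "'a set \<Rightarrow> ('a \<times> 'a \<Rightarrow> 'a \<times> 'a) \<Rightarrow> bool" where
  "YBE_solution S r \<longleftrightarrow> S \<noteq> {} \<and> bij_betw r (S \<times> S) (S \<times> S) \<and>
     (\<forall>x \<in> S. \<forall>y \<in> S. \<forall>z \<in> S.
        r12 r (r23 r (r12 r (x, y, z))) = r23 r (r12 r (r23 r (x, y, z))))"

definition nondegenerate :: "'a set \<Rightarrow> ('a \<times> 'a \<Rightarrow> 'a \<times> 'a) \<Rightarrow> bool" where
  "nondegenerate S r \<longleftrightarrow>
     (\<forall>x \<in> S. bij_betw (\<lambda>y. fst (r (x, y))) S S) \<and>
     (\<forall>y \<in> S. bij_betw (\<lambda>x. snd (r (x, y))) S S)"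

definition nondeg_YBE_solution :: "'a set \<Rightarrow> ('a \<times> 'a \<Rightarrow> 'a \<times> 'a) \<Rightarrow> bool" where
  "nondeg_YBE_solution S r \<longleftrightarrow> YBE_solution S r \<and> nondegenerate S r"

definition bilin_maps :: "('a, 'b) monoid_scheme \<Rightarrow> 'a set \<Rightarrow> ('a \<Rightarrow> 'a \<Rightarrow> 'a) set" where
  "bilin_maps G K = {\<alpha>. (\<forall>g \<in> carrier G. \<forall>h \<in> carrier G. \<alpha> g h \<in> K) \<and>
     (\<forall>g \<in> carrier G. \<forall>h \<in> carrier G. \<forall>k \<in> carrier G.
        \<alpha> (g \<otimes>\<^bsub>G\<^esub> h) k = \<alpha> g k \<otimes>\<^bsub>G\<^esub> \<alpha> h k \<and>
        \<alpha> g (h \<otimes>\<^bsub>G\<^esub> k) = \<alpha> g h \<otimes>\<^bsub>G\<^esub> \<alpha> g k) \<and>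
     (\<forall>k \<in> K. \<forall>g \<in> carrier G. \<alpha> k g = \<one>\<^bsub>G\<^esub> \<and> \<alpha> g k = \<one>\<^bsub>G\<^esub>)}"

definition endo_into :: "('a, 'b) monoid_scheme \<Rightarrow> 'a set \<Rightarrow> 'a set \<Rightarrow> ('a set \<Rightarrow> 'a set) set" where
  "endo_into G K A = {\<psi>. \<psi> \<in> hom (G Mod K) (G Mod K) \<and>
      \<psi> ` carrier (G Mod K) \<subseteq> (\<lambda>a. K #>\<^bsub>G\<^esub> a) ` A}"

definition is_lifting :: "('a, 'b) monoid_scheme \<Rightarrow> 'a set \<Rightarrow> 'a set \<Rightarrow> ('a set \<Rightarrow> 'a set) \<Rightarrow> ('a \<Rightarrow> 'a) \<Rightarrow> bool" where
  "is_lifting G K A \<psi> \<psi>u \<longleftrightarrow> (\<forall>g \<in> carrier G. \<psi>u g \<in> A \<and> K #>\<^bsub>G\<^esub> \<psi>u g = \<psi> (K #>\<^bsub>G\<^esub> g))"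

end

theory Submission
  imports Defs
begin



locale yb = group G for G (structure) +
  fixes K :: "'a set" and P :: "'a \<Rightarrow> 'a"
  assumes Ksub: "subgroup K G"
  and Kc: "\<lbrakk>k \<in> K; g \<in> carrier G\<rbrakk> \<Longrightarrow> k \<otimes> g = g \<otimes> k"
  and Pc: "g \<in> carrier G \<Longrightarrow> P g \<in> carrier G"
  and Pm: "\<lbrakk>a \<in> carrier G; b \<in> carrier G\<rbrakk> \<Longrightarrow> inv (P a \<otimes> P b) \<otimes> P (a \<otimes> b) \<in> K"
  and Pcm: "\<lbrakk>a \<in> carrier G; b \<in> carrier G\<rbrakk> \<Longrightarrow> inv (P b \<otimes> P a) \<otimes> (P a \<otimes> P b) \<in> K"
  and PK: "k \<in> K \<Longrightarrow> P k \<in> K"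
begin

lemma KG: "k \<in> K \<Longrightarrow> k \<in> carrier G" using subgroup.mem_carrier[OF Ksub] .
lemma K_m: "k \<in> K \<Longrightarrow> k' \<in> K \<Longrightarrow> k \<otimes> k' \<in> K" using subgroup.m_closed[OF Ksub] .
lemma K_inv: "k \<in> K \<Longrightarrow> inv k \<in> K" using subgroup.m_inv_closed[OF Ksub] .
lemma K_one: "\<one> \<in> K" using subgroup.one_closed[OF Ksub] .

lemma gc1[simp]: "x \<in> carrier G \<Longrightarrow> y \<in> carrier G \<Longrightarrow> x \<otimes> (inv x \<otimes> y) = y"
  by (simp flip: m_assoc)
lemma gc2[simp]: "x \<in> carrier G \<Longrightarrow> y \<in> carrier G \<Longrightarrow> inv x \<otimes> (x \<otimes> y) = y"
  by (simp flip: m_assoc)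

lemmas gs = m_assoc inv_mult_group

definition C where "C p u = p \<otimes> u \<otimes> inv p"

lemma C_closed[simp]: "p \<in> carrier G \<Longrightarrow> u \<in> carrier G \<Longrightarrow> C p u \<in> carrier G"
  by (simp add: C_def)
lemma C_comp: "p \<in> carrier G \<Longrightarrow> q \<in> carrier G \<Longrightarrow> u \<in> carrier G \<Longrightarrow> C p (C q u) = C (p \<otimes> q) u"
  by (simp add: C_def gs)
lemma C_central: "p \<in> carrier G \<Longrightarrow> k \<in> K \<Longrightarrow> u \<in> carrier G \<Longrightarrow> C (p \<otimes> k) u = C p u"
proof -
  assume a: "p \<in> carrier G" "k \<in> K" "u \<in> carrier G"
  have k: "k \<in> carrier G" using a KG by auto
  have "C (p \<otimes> k) u = p \<otimes> (k \<otimes> u) \<otimes> inv k \<otimes> inv p" using a k by (simp add: C_def gs)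
  also have "\<dots> = p \<otimes> u \<otimes> inv p" using a k Kc[of k u] by (simp add: gs)
  finally show ?thesis by (simp add: C_def)
qed
lemma C_fixK: "p \<in> carrier G \<Longrightarrow> k \<in> K \<Longrightarrow> C p k = k"
proof -
  assume a: "p \<in> carrier G" "k \<in> K"
  have k: "k \<in> carrier G" using a KG by auto
  have "C p k = k \<otimes> p \<otimes> inv p" using a k Kc[of k p] by (simp add: C_def)
  then show ?thesis using a k by (simp add: gs)
qed
lemma C_mult[simp]: "p \<in> carrier G \<Longrightarrow> a \<in> carrier G \<Longrightarrow> b \<in> carrier G \<Longrightarrow> C p (a \<otimes> b) = C p a \<otimes> C p b"
  by (simp add: C_def gs)
lemma C_inv[simp]: "p \<in> carrier G \<Longrightarrow> a \<in> carrier G \<Longrightarrow> C p (inv a) = inv (C p a)"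
  by (simp add: C_def gs)
lemma C_one[simp]: "u \<in> carrier G \<Longrightarrow> C \<one> u = u" by (simp add: C_def)
lemma C_cancel1[simp]: "p \<in> carrier G \<Longrightarrow> u \<in> carrier G \<Longrightarrow> C (inv p) (C p u) = u" by (simp add: C_def gs)
lemma C_cancel2[simp]: "p \<in> carrier G \<Longrightarrow> u \<in> carrier G \<Longrightarrow> C p (C (inv p) u) = u" by (simp add: C_def gs)

lemma Pk_eq: "a \<in> carrier G \<Longrightarrow> b \<in> carrier G \<Longrightarrow> P (a \<otimes> b) = P a \<otimes> P b \<otimes> (inv (P a \<otimes> P b) \<otimes> P (a \<otimes> b))"
  using Pc by (simp add: gs)

lemma CP_mult: "a \<in> carrier G \<Longrightarrow> b \<in> carrier G \<Longrightarrow> u \<in> carrier G \<Longrightarrow> C (P (a \<otimes> b)) u = C (P a) (C (P b) u)"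
  apply (subst Pk_eq, assumption+)
  apply (subst C_central)
  using Pc Pm by (auto simp: C_comp)

lemma CP_comm: "a \<in> carrier G \<Longrightarrow> b \<in> carrier G \<Longrightarrow> u \<in> carrier G \<Longrightarrow> C (P a) (C (P b) u) = C (P b) (C (P a) u)"
proof -
  assume a: "a \<in> carrier G" "b \<in> carrier G" "u \<in> carrier G"
  have "P a \<otimes> P b = P b \<otimes> P a \<otimes> (inv (P b \<otimes> P a) \<otimes> (P a \<otimes> P b))" using a Pc by (simp add: gs)
  then show ?thesis using a Pc Pcm C_central C_comp by (metis m_closed)
qed

lemma CP_K: "k \<in> K \<Longrightarrow> u \<in> carrier G \<Longrightarrow> C (P k) u = u"
proof -
  assume a: "k \<in> K" "u \<in> carrier G"
  then have "C (\<one> \<otimes> P k) u = C \<one> u" using C_central PK by blast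
  then show ?thesis using a PK KG by simp
qed

lemma CP_inv: "a \<in> carrier G \<Longrightarrow> u \<in> carrier G \<Longrightarrow> C (P (inv a)) u = C (inv (P a)) u"
proof -
  assume a: "a \<in> carrier G" "u \<in> carrier G"
  have "C (P a) (C (P (inv a)) u) = C (P (a \<otimes> inv a)) u" using a CP_mult[of a "inv a" u] by simp
  also have "\<dots> = u" using a CP_K K_one by simp
  finally have "C (inv (P a)) (C (P a) (C (P (inv a)) u)) = C (inv (P a)) u" by simp
  then show ?thesis using a Pc by simp
qed

lemma CP_C: "q \<in> carrier G \<Longrightarrow> u \<in> carrier G \<Longrightarrow> v \<in> carrier G \<Longrightarrow> C (P (C q u)) v = C (P u) v"
proof -
  assume a: "q \<in> carrier G" "u \<in> carrier G" "v \<in> carrier G"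
  have e: "C q u = q \<otimes> (u \<otimes> inv q)" using a by (simp add: C_def m_assoc)
  have "C (P (C q u)) v = C (P q) (C (P u) (C (P (inv q)) v))" using a by (simp only: e) (simp add: CP_mult)
  also have "\<dots> = C (P q) (C (P (inv q)) (C (P u) v))" using a CP_comm by simp
  also have "\<dots> = C (P u) v" using a Pc by (simp add: CP_inv)
  finally show ?thesis .
qed

definition cm where "cm p q \<longleftrightarrow> (\<forall>u\<in>carrier G. C p (C q u) = C q (C p u))"

lemma cm_sym: "cm p q \<Longrightarrow> cm q p" by (simp add: cm_def)
lemma cm_inv: "p \<in> carrier G \<Longrightarrow> q \<in> carrier G \<Longrightarrow> cm p q \<Longrightarrow> cm (inv p) q"
  unfolding cm_def
proof
  fix u assume a: "p \<in> carrier G" "q \<in> carrier G" "\<forall>u\<in>carrier G. C p (C q u) = C q (C p u)" "u \<in> carrier G"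
  define w where "w = C (inv p) u"
  have w: "w \<in> carrier G" using a by (simp add: w_def)
  have h: "C p (C q w) = C q (C p w)" using a(3) w by blast
  have "C q u = C q (C p w)" using a(1,4) by (simp add: w_def)
  hence "C q u = C p (C q w)" using h by simp
  hence "C (inv p) (C q u) = C q w" using a(1,2) w by simp
  thus "C (inv p) (C q u) = C q (C (inv p) u)" by (simp add: w_def)
qed
lemma cm_mult: "p \<in> carrier G \<Longrightarrow> p' \<in> carrier G \<Longrightarrow> q \<in> carrier G \<Longrightarrow> cm p q \<Longrightarrow> cm p' q \<Longrightarrow> cm (p \<otimes> p') q"
  unfolding cm_def
proof
  fix u assume a: "p \<in> carrier G" "p' \<in> carrier G" "q \<in> carrier G" "\<forall>u\<in>carrier G. C p (C q u) = C q (C p u)"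
    "\<forall>u\<in>carrier G. C p' (C q u) = C q (C p' u)" "u \<in> carrier G"
  have "C (p \<otimes> p') (C q u) = C p (C p' (C q u))" using a(1,2,3,6) by (simp add: C_comp m_assoc)
  also have "\<dots> = C p (C q (C p' u))" using a(5,6) by simp
  also have "\<dots> = C q (C p (C p' u))" using a(4) a(2,6) by simp
  also have "\<dots> = C q (C (p \<otimes> p') u)" using a(1,2,3,6) by (simp add: C_comp m_assoc)
  finally show "C (p \<otimes> p') (C q u) = C q (C (p \<otimes> p') u)" .
qed
lemma cm_one: "q \<in> carrier G \<Longrightarrow> cm \<one> q" by (simp add: cm_def)
lemma cm_pow_nat: "p \<in> carrier G \<Longrightarrow> q \<in> carrier G \<Longrightarrow> cm p q \<Longrightarrow> cm (p [^] (n::nat)) q"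
  by (induction n) (auto simp: cm_one cm_mult)
lemma cm_pow: "p \<in> carrier G \<Longrightarrow> q \<in> carrier G \<Longrightarrow> cm p q \<Longrightarrow> cm (p [^] (i::int)) q"
proof -
  assume a: "p \<in> carrier G" "q \<in> carrier G" "cm p q"
  have 1: "cm (inv (p [^] (nat (-i)))) q" using a cm_pow_nat cm_inv nat_pow_closed by meson
  have 2: "cm (p [^] (nat i)) q" using a cm_pow_nat by meson
  show ?thesis by (cases "i<0") (simp_all only: int_pow_def2 if_True if_False 1 2)
qed
lemma cm_pow2: "p \<in> carrier G \<Longrightarrow> q \<in> carrier G \<Longrightarrow> cm p q \<Longrightarrow> cm (p [^] (i::int)) (q [^] (j::int))"
  by (meson cm_pow cm_sym int_pow_closed)
lemma cm_P: "a \<in> carrier G \<Longrightarrow> b \<in> carrier G \<Longrightarrow> cm (P a) (P b)"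
  by (simp add: cm_def CP_comm)
lemma cmPP: "a \<in> carrier G \<Longrightarrow> b \<in> carrier G \<Longrightarrow> u \<in> carrier G \<Longrightarrow>
   C (P a [^] (i::int)) (C (P b [^] (j::int)) u) = C (P b [^] j) (C (P a [^] i) u)"
  using cm_pow2[OF Pc Pc cm_P] unfolding cm_def by blast

lemma CPow_add: "a \<in> carrier G \<Longrightarrow> u \<in> carrier G \<Longrightarrow> C (P a [^] (i::int)) (C (P a [^] (i'::int)) u) = C (P a [^] (i + i')) u"
  using Pc by (simp add: C_comp int_pow_mult)

definition E where "E a b c i j k u = C (P a [^] (i::int)) (C (P b [^] (j::int)) (C (P c [^] (k::int)) u))"

context fixes a b c assumes abc: "a \<in> carrier G" "b \<in> carrier G" "c \<in> carrier G"
begin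
lemma E_closed[simp]: "u \<in> carrier G \<Longrightarrow> E a b c i j k u \<in> carrier G" using abc Pc by (simp add: E_def)
lemma E_mult[simp]: "u \<in> carrier G \<Longrightarrow> v \<in> carrier G \<Longrightarrow> E a b c i j k (u \<otimes> v) = E a b c i j k u \<otimes> E a b c i j k v"
  using abc Pc by (simp add: E_def)
lemma E_inv[simp]: "u \<in> carrier G \<Longrightarrow> E a b c i j k (inv u) = inv (E a b c i j k u)"
  using abc Pc by (simp add: E_def)
lemma E_0[simp]: "u \<in> carrier G \<Longrightarrow> E a b c 0 0 0 u = u" by (simp add: E_def)
lemma E_K[simp]: "u \<in> K \<Longrightarrow> E a b c i j k u = u" using abc Pc KG by (simp add: E_def C_fixK)
lemma E_comp[simp]: "u \<in> carrier G \<Longrightarrow> E a b c i j k (E a b c i' j' k' u) = E a b c (i+i') (j+j') (k+k') u"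
proof -
  assume u: "u \<in> carrier G"
  note [simp] = abc Pc u
  have "E a b c i j k (E a b c i' j' k' u) = C (P a [^] i) (C (P b [^] j) (C (P c [^] k) (C (P a [^] i') (C (P b [^] j') (C (P c [^] k') u)))))"
    by (simp add: E_def)
  also have "\<dots> = C (P a [^] i) (C (P b [^] j) (C (P a [^] i') (C (P c [^] k) (C (P b [^] j') (C (P c [^] k') u)))))"
    by (subst cmPP[of c a], auto)
  also have "\<dots> = C (P a [^] i) (C (P a [^] i') (C (P b [^] j) (C (P c [^] k) (C (P b [^] j') (C (P c [^] k') u)))))"
    by (subst cmPP[of b a], auto)
  also have "\<dots> = C (P a [^] i) (C (P a [^] i') (C (P b [^] j) (C (P b [^] j') (C (P c [^] k) (C (P c [^] k') u)))))"
    by (subst cmPP[of c b], auto)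
  also have "\<dots> = E a b c (i+i') (j+j') (k+k') u" by (simp add: E_def CPow_add)
  finally show ?thesis .
qed
lemma E_Pa: "u \<in> carrier G \<Longrightarrow> C (P a) u = E a b c 1 0 0 u" using abc Pc by (simp add: E_def)
lemma E_Pb: "u \<in> carrier G \<Longrightarrow> C (P b) u = E a b c 0 1 0 u" using abc Pc by (simp add: E_def)
lemma E_Pc: "u \<in> carrier G \<Longrightarrow> C (P c) u = E a b c 0 0 1 u" using abc Pc by (simp add: E_def)
lemma E_Pai: "u \<in> carrier G \<Longrightarrow> C (inv (P a)) u = E a b c (-1) 0 0 u" using abc Pc by (simp add: E_def int_pow_neg)
lemma E_Pbi: "u \<in> carrier G \<Longrightarrow> C (inv (P b)) u = E a b c 0 (-1) 0 u" using abc Pc by (simp add: E_def int_pow_neg)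
lemma E_Pci: "u \<in> carrier G \<Longrightarrow> C (inv (P c)) u = E a b c 0 0 (-1) u" using abc Pc by (simp add: E_def int_pow_neg)
lemma E_Lam[simp]: "u \<in> carrier G \<Longrightarrow> v \<in> carrier G \<Longrightarrow> C (P (E a b c i j k u)) v = C (P u) v"
  using abc Pc by (simp add: E_def CP_C)
lemma E_Lami[simp]: "u \<in> carrier G \<Longrightarrow> v \<in> carrier G \<Longrightarrow> C (inv (P (E a b c i j k u))) v = C (inv (P u)) v"
  using abc Pc by (metis CP_inv E_Lam E_closed inv_closed E_inv)
end

lemmas Esimps = E_closed E_mult E_inv E_0 E_comp E_Lam E_Lami CP_mult CP_inv
  E_Pa E_Pb E_Pc E_Pai E_Pbi E_Pci

end


context yb begin

lemma CPi_mult: "a \<in> carrier G \<Longrightarrow> b \<in> carrier G \<Longrightarrow> v \<in> carrier G \<Longrightarrow>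
  C (inv (P (a \<otimes> b))) v = C (inv (P b)) (C (inv (P a)) v)"
  by (metis CP_inv CP_mult inv_closed inv_mult_group m_closed C_closed Pc)
lemma CPi_inv: "a \<in> carrier G \<Longrightarrow> v \<in> carrier G \<Longrightarrow> C (inv (P (inv a))) v = C (P a) v"
  by (metis CP_inv inv_closed inv_inv)
lemmas CPs = CP_mult CP_inv CPi_mult CPi_inv

lemmas Erules = E_closed E_mult E_inv E_0 E_comp E_Lam E_Lami E_Pa E_Pb E_Pc E_Pai E_Pbi E_Pci

definition s1 where "s1 g h = P g \<otimes> h \<otimes> inv (P g)"
definition t1 where "t1 h g = inv (P h) \<otimes> P g \<otimes> inv h \<otimes> inv (P g) \<otimes> g \<otimes> P g \<otimes> h \<otimes> inv (P g) \<otimes> P h"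

lemma s1_C: "g \<in> carrier G \<Longrightarrow> h \<in> carrier G \<Longrightarrow> s1 g h = C (P g) h" by (simp add: s1_def C_def)
lemma t1_C: "g \<in> carrier G \<Longrightarrow> h \<in> carrier G \<Longrightarrow> t1 h g = C (inv (P h)) (inv (C (P g) h) \<otimes> g \<otimes> C (P g) h)"
  using Pc by (simp add: t1_def C_def gs)

lemma ybe1a: "x \<in> carrier G \<Longrightarrow> y \<in> carrier G \<Longrightarrow> z \<in> carrier G \<Longrightarrow>
  s1 (s1 x y) (s1 (t1 y x) z) = s1 x (s1 y z)"
  using Pc by (simp add: s1_C t1_C Erules[where a=x and b=y and c=z] CPs gs)
lemma ybe1b: "x \<in> carrier G \<Longrightarrow> y \<in> carrier G \<Longrightarrow> z \<in> carrier G \<Longrightarrow>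
  t1 (s1 (t1 y x) z) (s1 x y) = s1 (t1 (s1 y z) x) (t1 z y)"
  using Pc by (simp add: s1_C t1_C Erules[where a=x and b=y and c=z] CPs gs)
lemma ybe1c: "x \<in> carrier G \<Longrightarrow> y \<in> carrier G \<Longrightarrow> z \<in> carrier G \<Longrightarrow>
  t1 z (t1 y x) = t1 (t1 z y) (t1 (s1 y z) x)"
  using Pc by (simp add: s1_C t1_C Erules[where a=x and b=y and c=z] CPs gs)
end


context yb begin

definition s2 where "s2 g h = g \<otimes> P g \<otimes> h \<otimes> inv (P g) \<otimes> inv g"
definition t2 where "t2 h g = inv (P h) \<otimes> g \<otimes> P h"
definition s3 where "s3 g h = inv (P g) \<otimes> h \<otimes> P g"
definition t3 where "t3 h g = inv (P g) \<otimes> inv h \<otimes> P g \<otimes> g \<otimes> h"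
definition s4 where "s4 g h = g \<otimes> h \<otimes> P h \<otimes> inv g \<otimes> inv (P h)"
definition t4 where "t4 h g = P h \<otimes> g \<otimes> inv (P h)"

lemma s2_C: "g \<in> carrier G \<Longrightarrow> h \<in> carrier G \<Longrightarrow> s2 g h = g \<otimes> C (P g) h \<otimes> inv g" using Pc by (simp add: s2_def C_def gs)
lemma t2_C: "g \<in> carrier G \<Longrightarrow> h \<in> carrier G \<Longrightarrow> t2 h g = C (inv (P h)) g" using Pc by (simp add: t2_def C_def gs)
lemma s3_C: "g \<in> carrier G \<Longrightarrow> h \<in> carrier G \<Longrightarrow> s3 g h = C (inv (P g)) h" using Pc by (simp add: s3_def C_def gs)
lemma t3_C: "g \<in> carrier G \<Longrightarrow> h \<in> carrier G \<Longrightarrow> t3 h g = inv (C (inv (P g)) h) \<otimes> g \<otimes> h" using Pc by (simp add: t3_def C_def gs)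
lemma s4_C: "g \<in> carrier G \<Longrightarrow> h \<in> carrier G \<Longrightarrow> s4 g h = g \<otimes> h \<otimes> inv (C (P h) g)" using Pc by (simp add: s4_def C_def gs)
lemma t4_C: "g \<in> carrier G \<Longrightarrow> h \<in> carrier G \<Longrightarrow> t4 h g = C (P h) g" using Pc by (simp add: t4_def C_def gs)

lemmas SC = s1_C t1_C s2_C t2_C s3_C t3_C s4_C t4_C

lemma ybe2a: "x \<in> carrier G \<Longrightarrow> y \<in> carrier G \<Longrightarrow> z \<in> carrier G \<Longrightarrow>
  s2 (s2 x y) (s2 (t2 y x) z) = s2 x (s2 y z)"
  using Pc by (simp add: SC Erules[where a=x and b=y and c=z] CPs gs)
lemma ybe2b: "x \<in> carrier G \<Longrightarrow> y \<in> carrier G \<Longrightarrow> z \<in> carrier G \<Longrightarrow>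
  t2 (s2 (t2 y x) z) (s2 x y) = s2 (t2 (s2 y z) x) (t2 z y)"
  using Pc by (simp add: SC Erules[where a=x and b=y and c=z] CPs gs)
lemma ybe2c: "x \<in> carrier G \<Longrightarrow> y \<in> carrier G \<Longrightarrow> z \<in> carrier G \<Longrightarrow>
  t2 z (t2 y x) = t2 (t2 z y) (t2 (s2 y z) x)"
  using Pc by (simp add: SC Erules[where a=x and b=y and c=z] CPs gs)
lemma ybe3a: "x \<in> carrier G \<Longrightarrow> y \<in> carrier G \<Longrightarrow> z \<in> carrier G \<Longrightarrow>
  s3 (s3 x y) (s3 (t3 y x) z) = s3 x (s3 y z)"
  using Pc by (simp add: SC Erules[where a=x and b=y and c=z] CPs gs)
lemma ybe3b: "x \<in> carrier G \<Longrightarrow> y \<in> carrier G \<Longrightarrow> z \<in> carrier G \<Longrightarrow>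
  t3 (s3 (t3 y x) z) (s3 x y) = s3 (t3 (s3 y z) x) (t3 z y)"
  using Pc by (simp add: SC Erules[where a=x and b=y and c=z] CPs gs)
lemma ybe3c: "x \<in> carrier G \<Longrightarrow> y \<in> carrier G \<Longrightarrow> z \<in> carrier G \<Longrightarrow>
  t3 z (t3 y x) = t3 (t3 z y) (t3 (s3 y z) x)"
  using Pc by (simp add: SC Erules[where a=x and b=y and c=z] CPs gs)
lemma ybe4a: "x \<in> carrier G \<Longrightarrow> y \<in> carrier G \<Longrightarrow> z \<in> carrier G \<Longrightarrow>
  s4 (s4 x y) (s4 (t4 y x) z) = s4 x (s4 y z)"
  using Pc by (simp add: SC Erules[where a=x and b=y and c=z] CPs gs)
lemma ybe4b: "x \<in> carrier G \<Longrightarrow> y \<in> carrier G \<Longrightarrow> z \<in> carrier G \<Longrightarrow>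
  t4 (s4 (t4 y x) z) (s4 x y) = s4 (t4 (s4 y z) x) (t4 z y)"
  using Pc by (simp add: SC Erules[where a=x and b=y and c=z] CPs gs)
lemma ybe4c: "x \<in> carrier G \<Longrightarrow> y \<in> carrier G \<Longrightarrow> z \<in> carrier G \<Longrightarrow>
  t4 z (t4 y x) = t4 (t4 z y) (t4 (s4 y z) x)"
  using Pc by (simp add: SC Erules[where a=x and b=y and c=z] CPs gs)

end


context yb begin

lemmas N1 = SC CPs gs
lemmas N2 = Erules[where c=\<one>]

lemma inv12: "x \<in> carrier G \<Longrightarrow> y \<in> carrier G \<Longrightarrow> s2 (s1 x y) (t1 y x) = x \<and> t2 (t1 y x) (s1 x y) = y"
  using Pc by (simp add: N1 N2[where a=x and b=y])
lemma inv21: "x \<in> carrier G \<Longrightarrow> y \<in> carrier G \<Longrightarrow> s1 (s2 x y) (t2 y x) = x \<and> t1 (t2 y x) (s2 x y) = y"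
  using Pc by (simp add: N1 N2[where a=x and b=y])
lemma inv34: "x \<in> carrier G \<Longrightarrow> y \<in> carrier G \<Longrightarrow> s4 (s3 x y) (t3 y x) = x \<and> t4 (t3 y x) (s3 x y) = y"
  using Pc by (simp add: N1 N2[where a=x and b=y])
lemma inv43: "x \<in> carrier G \<Longrightarrow> y \<in> carrier G \<Longrightarrow> s3 (s4 x y) (t4 y x) = x \<and> t3 (t4 y x) (s4 x y) = y"
  using Pc by (simp add: N1 N2[where a=x and b=y])

lemma nd1a: "x \<in> carrier G \<Longrightarrow> y \<in> carrier G \<Longrightarrow> C (inv (P x)) (s1 x y) = y \<and> s1 x (C (inv (P x)) y) = y"
  using Pc by (simp add: N1 N2[where a=x and b=y])
lemma nd1b: "h \<in> carrier G \<Longrightarrow> g \<in> carrier G \<Longrightarrow> (\<lambda>t. C (P t) h \<otimes> C (P h) t \<otimes> inv (C (P t) h)) (t1 h g) = g"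
  using Pc by (simp add: N1 N2[where a=h and b=g])
lemma nd1c: "h \<in> carrier G \<Longrightarrow> t \<in> carrier G \<Longrightarrow> t1 h (C (P t) h \<otimes> C (P h) t \<otimes> inv (C (P t) h)) = t"
  using Pc by (simp add: N1 N2[where a=h and b=t])
lemma nd2a: "x \<in> carrier G \<Longrightarrow> y \<in> carrier G \<Longrightarrow> C (inv (P x)) (inv x \<otimes> s2 x y \<otimes> x) = y \<and> s2 x (C (inv (P x)) (inv x \<otimes> y \<otimes> x)) = y"
  using Pc by (simp add: N1 N2[where a=x and b=y])
lemma nd2b: "h \<in> carrier G \<Longrightarrow> g \<in> carrier G \<Longrightarrow> C (P h) (t2 h g) = g \<and> t2 h (C (P h) g) = g"
  using Pc by (simp add: N1 N2[where a=h and b=g])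
lemma nd3a: "x \<in> carrier G \<Longrightarrow> y \<in> carrier G \<Longrightarrow> C (P x) (s3 x y) = y \<and> s3 x (C (P x) y) = y"
  using Pc by (simp add: N1 N2[where a=x and b=y])
lemma nd3b: "h \<in> carrier G \<Longrightarrow> g \<in> carrier G \<Longrightarrow> (\<lambda>t. C (inv (P t)) h \<otimes> t \<otimes> inv h) (t3 h g) = g"
  using Pc by (simp add: N1 N2[where a=h and b=g])
lemma nd3c: "h \<in> carrier G \<Longrightarrow> t \<in> carrier G \<Longrightarrow> t3 h (C (inv (P t)) h \<otimes> t \<otimes> inv h) = t"
  using Pc by (simp add: N1 N2[where a=h and b=t])
lemma nd4a: "g \<in> carrier G \<Longrightarrow> h \<in> carrier G \<Longrightarrow> (\<lambda>t. inv g \<otimes> t \<otimes> C (P t) g) (s4 g h) = h"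
  using Pc by (simp add: N1 N2[where a=g and b=h])
lemma nd4b: "g \<in> carrier G \<Longrightarrow> t \<in> carrier G \<Longrightarrow> s4 g (inv g \<otimes> t \<otimes> C (P t) g) = t"
  using Pc by (simp add: N1 N2[where a=g and b=t])
lemma nd4c: "h \<in> carrier G \<Longrightarrow> g \<in> carrier G \<Longrightarrow> C (inv (P h)) (t4 h g) = g \<and> t4 h (C (inv (P h)) g) = g"
  using Pc by (simp add: N1 N2[where a=h and b=g])

definition M where "M k u = u \<otimes> k"
context fixes k assumes k: "k \<in> K" begin
lemma kG: "k \<in> carrier G" using k KG by simp
lemma M_closed[simp]: "u \<in> carrier G \<Longrightarrow> M k u \<in> carrier G" using kG by (simp add: M_def)
lemma M_m1[simp]: "a \<in> carrier G \<Longrightarrow> b \<in> carrier G \<Longrightarrow> M k a \<otimes> b = M k (a \<otimes> b)"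
  using kG Kc[OF k] by (simp add: M_def m_assoc)
lemma M_m2[simp]: "a \<in> carrier G \<Longrightarrow> b \<in> carrier G \<Longrightarrow> a \<otimes> M k b = M k (a \<otimes> b)"
  using kG by (simp add: M_def m_assoc)
lemma M_inv[simp]: "a \<in> carrier G \<Longrightarrow> inv (M k a) = M (inv k) (inv a)"
  using kG Kc[OF K_inv[OF k]] by (simp add: M_def inv_mult_group)
lemma M_C[simp]: "p \<in> carrier G \<Longrightarrow> a \<in> carrier G \<Longrightarrow> C p (M k a) = M k (C p a)"
  using kG k by (simp add: M_def C_fixK)
lemma M_CP[simp]: "a \<in> carrier G \<Longrightarrow> v \<in> carrier G \<Longrightarrow> C (P (M k a)) v = C (P a) v"
  using kG k by (simp add: M_def CP_mult CP_K)
lemma M_CPi[simp]: "a \<in> carrier G \<Longrightarrow> v \<in> carrier G \<Longrightarrow> C (inv (P (M k a))) v = C (inv (P a)) v"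
proof -
  assume a: "a \<in> carrier G" "v \<in> carrier G"
  have "C (inv (P k)) w = w" if "w \<in> carrier G" for w
    using CP_inv[of k w] CP_K[of "inv k" w] K_inv[OF k] kG that by simp
  then show ?thesis using a kG Pc by (simp add: M_def CPi_mult)
qed
end
lemma M_MM[simp]: "k \<in> K \<Longrightarrow> k' \<in> K \<Longrightarrow> a \<in> carrier G \<Longrightarrow> M k (M k' a) = M (k' \<otimes> k) a"
  using KG by (simp add: M_def m_assoc)
lemma M_one[simp]: "a \<in> carrier G \<Longrightarrow> M \<one> a = a" by (simp add: M_def)
lemma K_inv'[simp]: "k \<in> K \<Longrightarrow> inv k \<in> K" by (rule K_inv)

lemmas NM = SC CPs gs M_closed M_m1 M_m2 M_inv M_C M_CP M_CPi M_MM KG K_inv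

lemma eqv1: "u \<in> carrier G \<Longrightarrow> v \<in> carrier G \<Longrightarrow> k \<in> K \<Longrightarrow> s1 (M k u) v = s1 u v"
  using Pc by (simp add: NM)
lemma eqv2: "u \<in> carrier G \<Longrightarrow> v \<in> carrier G \<Longrightarrow> k \<in> K \<Longrightarrow> s1 u (M k v) = M k (s1 u v)"
  using Pc by (simp add: NM)
lemma eqv3: "u \<in> carrier G \<Longrightarrow> v \<in> carrier G \<Longrightarrow> k \<in> K \<Longrightarrow> t1 (M k v) u = t1 v u"
  using Pc by (simp add: NM)
lemma eqv4: "u \<in> carrier G \<Longrightarrow> v \<in> carrier G \<Longrightarrow> k \<in> K \<Longrightarrow> t1 v (M k u) = M k (t1 v u)"
  using Pc by (simp add: NM)
lemma eqv5: "u \<in> carrier G \<Longrightarrow> v \<in> carrier G \<Longrightarrow> k \<in> K \<Longrightarrow> s2 (M k u) v = s2 u v"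
  using Pc by (simp add: NM)
lemma eqv6: "u \<in> carrier G \<Longrightarrow> v \<in> carrier G \<Longrightarrow> k \<in> K \<Longrightarrow> s2 u (M k v) = M k (s2 u v)"
  using Pc by (simp add: NM)
lemma eqv7: "u \<in> carrier G \<Longrightarrow> v \<in> carrier G \<Longrightarrow> k \<in> K \<Longrightarrow> t2 (M k v) u = t2 v u"
  using Pc by (simp add: NM)
lemma eqv8: "u \<in> carrier G \<Longrightarrow> v \<in> carrier G \<Longrightarrow> k \<in> K \<Longrightarrow> t2 v (M k u) = M k (t2 v u)"
  using Pc by (simp add: NM)
lemma eqv9: "u \<in> carrier G \<Longrightarrow> v \<in> carrier G \<Longrightarrow> k \<in> K \<Longrightarrow> s3 (M k u) v = s3 u v"
  using Pc by (simp add: NM)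
lemma eqv10: "u \<in> carrier G \<Longrightarrow> v \<in> carrier G \<Longrightarrow> k \<in> K \<Longrightarrow> s3 u (M k v) = M k (s3 u v)"
  using Pc by (simp add: NM)
lemma eqv11: "u \<in> carrier G \<Longrightarrow> v \<in> carrier G \<Longrightarrow> k \<in> K \<Longrightarrow> t3 (M k v) u = t3 v u"
  using Pc by (simp add: NM)
lemma eqv12: "u \<in> carrier G \<Longrightarrow> v \<in> carrier G \<Longrightarrow> k \<in> K \<Longrightarrow> t3 v (M k u) = M k (t3 v u)"
  using Pc by (simp add: NM)
lemma eqv13: "u \<in> carrier G \<Longrightarrow> v \<in> carrier G \<Longrightarrow> k \<in> K \<Longrightarrow> s4 (M k u) v = s4 u v"
  using Pc by (simp add: NM)
lemma eqv14: "u \<in> carrier G \<Longrightarrow> v \<in> carrier G \<Longrightarrow> k \<in> K \<Longrightarrow> s4 u (M k v) = M k (s4 u v)"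
  using Pc by (simp add: NM)
lemma eqv15: "u \<in> carrier G \<Longrightarrow> v \<in> carrier G \<Longrightarrow> k \<in> K \<Longrightarrow> t4 (M k v) u = t4 v u"
  using Pc by (simp add: NM)
lemma eqv16: "u \<in> carrier G \<Longrightarrow> v \<in> carrier G \<Longrightarrow> k \<in> K \<Longrightarrow> t4 v (M k u) = M k (t4 v u)"
  using Pc by (simp add: NM)

end


context yb begin

lemma kc1: "k \<in> K \<Longrightarrow> k' \<in> K \<Longrightarrow> k \<otimes> k' = k' \<otimes> k" using Kc[of k k'] KG[of k'] by simp
lemma kc2: "k \<in> K \<Longrightarrow> k' \<in> K \<Longrightarrow> r \<in> carrier G \<Longrightarrow> k \<otimes> (k' \<otimes> r) = k' \<otimes> (k \<otimes> r)"
  using KG[of k] KG[of k'] kc1[of k k'] by (simp flip: m_assoc)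

lemma nd_tw:
  assumes bij: "bij_betw f (carrier G) (carrier G)"
  and fc: "\<And>y. y \<in> carrier G \<Longrightarrow> f y \<in> carrier G"
  and bK: "\<And>y. y \<in> carrier G \<Longrightarrow> b y \<in> K"
  and fk: "\<And>y k. y \<in> carrier G \<Longrightarrow> k \<in> K \<Longrightarrow> f (y \<otimes> k) = f y \<otimes> k"
  and bk: "\<And>y k. y \<in> carrier G \<Longrightarrow> k \<in> K \<Longrightarrow> b (y \<otimes> k) = b y"
  and cf: "\<And>y. y \<in> carrier G \<Longrightarrow> c (f y) = b y"
  and ck: "\<And>w k. w \<in> carrier G \<Longrightarrow> k \<in> K \<Longrightarrow> c (w \<otimes> k) = c w"
  shows "bij_betw (\<lambda>y. f y \<otimes> b y) (carrier G) (carrier G)"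
  unfolding bij_betw_def
proof
  show "inj_on (\<lambda>y. f y \<otimes> b y) (carrier G)"
  proof (rule inj_onI)
    fix y y' assume y: "y \<in> carrier G" "y' \<in> carrier G" and e: "f y \<otimes> b y = f y' \<otimes> b y'"
    have 1: "c (f y \<otimes> b y) = b y" using ck[OF fc[OF y(1)] bK[OF y(1)]] cf[OF y(1)] by simp
    have 2: "c (f y' \<otimes> b y') = b y'" using ck[OF fc[OF y(2)] bK[OF y(2)]] cf[OF y(2)] by simp
    have bb: "b y = b y'" using 1 2 e by metis
    have "f y \<otimes> b y = f y' \<otimes> b y" using e bb by metis
    hence "f y = f y'" using fc[OF y(1)] fc[OF y(2)] KG[OF bK[OF y(1)]] by simp
    thus "y = y'" using bij y unfolding bij_betw_def inj_on_def by blast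
  qed
  show "(\<lambda>y. f y \<otimes> b y) ` carrier G = carrier G"
  proof
    show "(\<lambda>y. f y \<otimes> b y) ` carrier G \<subseteq> carrier G"
    proof (rule image_subsetI)
      fix y assume "y \<in> carrier G"
      then show "f y \<otimes> b y \<in> carrier G" using fc[of y] KG[OF bK[of y]] by simp
    qed
    show "carrier G \<subseteq> (\<lambda>y. f y \<otimes> b y) ` carrier G"
    proof
      fix t assume t: "t \<in> carrier G"
      have "t \<in> f ` carrier G" using t bij by (simp add: bij_betw_def)
      then obtain y0 where y0: "y0 \<in> carrier G" "f y0 = t" by (rule imageE) auto
      define y where "y = y0 \<otimes> inv (b y0)"
      have k0: "b y0 \<in> K" "inv (b y0) \<in> K" "b y0 \<in> carrier G" using bK[OF y0(1)] K_inv KG by auto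
      have yc: "y \<in> carrier G" using y0 k0 by (simp add: y_def)
      have "f y = t \<otimes> inv (b y0)" unfolding y_def using fk[OF y0(1) k0(2)] y0(2) by simp
      moreover have "b y = b y0" unfolding y_def using bk[OF y0(1) k0(2)] .
      ultimately have "f y \<otimes> b y = t" using t k0 by (simp add: m_assoc)
      thus "t \<in> (\<lambda>y. f y \<otimes> b y) ` carrier G" using yc by force
    qed
  qed
qed

lemma twist:
  assumes sc: "\<And>u v. u \<in> carrier G \<Longrightarrow> v \<in> carrier G \<Longrightarrow> \<sigma> u v \<in> carrier G"
  and tc: "\<And>u v. u \<in> carrier G \<Longrightarrow> v \<in> carrier G \<Longrightarrow> \<tau> v u \<in> carrier G"
  and Y1: "\<And>x y z. x \<in> carrier G \<Longrightarrow> y \<in> carrier G \<Longrightarrow> z \<in> carrier G \<Longrightarrow>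
       \<sigma> (\<sigma> x y) (\<sigma> (\<tau> y x) z) = \<sigma> x (\<sigma> y z)"
  and Y2: "\<And>x y z. x \<in> carrier G \<Longrightarrow> y \<in> carrier G \<Longrightarrow> z \<in> carrier G \<Longrightarrow>
       \<tau> (\<sigma> (\<tau> y x) z) (\<sigma> x y) = \<sigma> (\<tau> (\<sigma> y z) x) (\<tau> z y)"
  and Y3: "\<And>x y z. x \<in> carrier G \<Longrightarrow> y \<in> carrier G \<Longrightarrow> z \<in> carrier G \<Longrightarrow>
       \<tau> z (\<tau> y x) = \<tau> (\<tau> z y) (\<tau> (\<sigma> y z) x)"
  and bij0: "bij_betw (\<lambda>(u, v). (\<sigma> u v, \<tau> v u)) (carrier G \<times> carrier G) (carrier G \<times> carrier G)"
  and nd1: "\<And>x. x \<in> carrier G \<Longrightarrow> bij_betw (\<sigma> x) (carrier G) (carrier G)"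
  and nd2: "\<And>y. y \<in> carrier G \<Longrightarrow> bij_betw (\<lambda>x. \<tau> y x) (carrier G) (carrier G)"
  and e1: "\<And>u v k. u \<in> carrier G \<Longrightarrow> v \<in> carrier G \<Longrightarrow> k \<in> K \<Longrightarrow> \<sigma> (u \<otimes> k) v = \<sigma> u v"
  and e2: "\<And>u v k. u \<in> carrier G \<Longrightarrow> v \<in> carrier G \<Longrightarrow> k \<in> K \<Longrightarrow> \<sigma> u (v \<otimes> k) = \<sigma> u v \<otimes> k"
  and e3: "\<And>u v k. u \<in> carrier G \<Longrightarrow> v \<in> carrier G \<Longrightarrow> k \<in> K \<Longrightarrow> \<tau> (v \<otimes> k) u = \<tau> v u"
  and e4: "\<And>u v k. u \<in> carrier G \<Longrightarrow> v \<in> carrier G \<Longrightarrow> k \<in> K \<Longrightarrow> \<tau> v (u \<otimes> k) = \<tau> v u \<otimes> k"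
  and bK: "\<And>u v. u \<in> carrier G \<Longrightarrow> v \<in> carrier G \<Longrightarrow> \<beta> u v \<in> K"
  and gK: "\<And>u v. u \<in> carrier G \<Longrightarrow> v \<in> carrier G \<Longrightarrow> \<gamma> u v \<in> K"
  and b1: "\<And>u v k. u \<in> carrier G \<Longrightarrow> v \<in> carrier G \<Longrightarrow> k \<in> K \<Longrightarrow> \<beta> (u \<otimes> k) v = \<beta> u v"
  and b2: "\<And>u v k. u \<in> carrier G \<Longrightarrow> v \<in> carrier G \<Longrightarrow> k \<in> K \<Longrightarrow> \<beta> u (v \<otimes> k) = \<beta> u v"
  and g1: "\<And>u v k. u \<in> carrier G \<Longrightarrow> v \<in> carrier G \<Longrightarrow> k \<in> K \<Longrightarrow> \<gamma> (u \<otimes> k) v = \<gamma> u v"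
  and g2: "\<And>u v k. u \<in> carrier G \<Longrightarrow> v \<in> carrier G \<Longrightarrow> k \<in> K \<Longrightarrow> \<gamma> u (v \<otimes> k) = \<gamma> u v"
  and bs1: "\<And>u v w. u \<in> carrier G \<Longrightarrow> v \<in> carrier G \<Longrightarrow> w \<in> carrier G \<Longrightarrow> \<beta> (\<sigma> u v) w = \<beta> v w"
  and bs2: "\<And>u v w. u \<in> carrier G \<Longrightarrow> v \<in> carrier G \<Longrightarrow> w \<in> carrier G \<Longrightarrow> \<beta> w (\<sigma> u v) = \<beta> w v"
  and bt1: "\<And>u v w. u \<in> carrier G \<Longrightarrow> v \<in> carrier G \<Longrightarrow> w \<in> carrier G \<Longrightarrow> \<beta> (\<tau> v u) w = \<beta> u w"
  and bt2: "\<And>u v w. u \<in> carrier G \<Longrightarrow> v \<in> carrier G \<Longrightarrow> w \<in> carrier G \<Longrightarrow> \<beta> w (\<tau> v u) = \<beta> w u"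
  and gs1: "\<And>u v w. u \<in> carrier G \<Longrightarrow> v \<in> carrier G \<Longrightarrow> w \<in> carrier G \<Longrightarrow> \<gamma> (\<sigma> u v) w = \<gamma> v w"
  and gs2: "\<And>u v w. u \<in> carrier G \<Longrightarrow> v \<in> carrier G \<Longrightarrow> w \<in> carrier G \<Longrightarrow> \<gamma> w (\<sigma> u v) = \<gamma> w v"
  and gt1: "\<And>u v w. u \<in> carrier G \<Longrightarrow> v \<in> carrier G \<Longrightarrow> w \<in> carrier G \<Longrightarrow> \<gamma> (\<tau> v u) w = \<gamma> u w"
  and gt2: "\<And>u v w. u \<in> carrier G \<Longrightarrow> v \<in> carrier G \<Longrightarrow> w \<in> carrier G \<Longrightarrow> \<gamma> w (\<tau> v u) = \<gamma> w u"
  shows "nondeg_YBE_solution (carrier G) (\<lambda>(u, v). (\<sigma> u v \<otimes> \<beta> u v, \<tau> v u \<otimes> \<gamma> u v))"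
proof -
  note KG[simp] K_m[simp] K_inv[simp] sc[simp] tc[simp] bK[simp] gK[simp]
  define R where "R = (\<lambda>(u, v). (\<sigma> u v \<otimes> \<beta> u v, \<tau> v u \<otimes> \<gamma> u v))"
  define T where "T = (\<lambda>(a, b). (a \<otimes> \<beta> b a, b \<otimes> \<gamma> b a))"
  define T' where "T' = (\<lambda>(a, b). (a \<otimes> inv (\<beta> b a), b \<otimes> inv (\<gamma> b a)))"
  have bijT: "bij_betw T (carrier G \<times> carrier G) (carrier G \<times> carrier G)"
  proof (rule bij_betw_byWitness[where f'=T'])
    show "\<forall>a\<in>carrier G \<times> carrier G. T' (T a) = a"
      by (auto simp: T_def T'_def b1 b2 g1 g2 m_assoc)
    show "\<forall>a\<in>carrier G \<times> carrier G. T (T' a) = a"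
      by (auto simp: T_def T'_def b1 b2 g1 g2 m_assoc)
    show "T ` (carrier G \<times> carrier G) \<subseteq> carrier G \<times> carrier G" by (auto simp: T_def)
    show "T' ` (carrier G \<times> carrier G) \<subseteq> carrier G \<times> carrier G" by (auto simp: T'_def)
  qed
  have bijR: "bij_betw R (carrier G \<times> carrier G) (carrier G \<times> carrier G)"
  proof -
    have "bij_betw (T \<circ> (\<lambda>(u, v). (\<sigma> u v, \<tau> v u))) (carrier G \<times> carrier G) (carrier G \<times> carrier G)"
      using bij0 bijT by (rule bij_betw_trans)
    moreover have "\<And>p. p \<in> carrier G \<times> carrier G \<Longrightarrow> (T \<circ> (\<lambda>(u, v). (\<sigma> u v, \<tau> v u))) p = R p"
      by (auto simp: T_def R_def bt1 bs2 gt1 gs2)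
    ultimately show ?thesis using bij_betw_cong by blast
  qed
  have ybe: "r12 R (r23 R (r12 R (x, y, z))) = r23 R (r12 R (r23 R (x, y, z)))"
    if xyz: "x \<in> carrier G" "y \<in> carrier G" "z \<in> carrier G" for x y z
    using xyz Y1[OF xyz] Y2[OF xyz]  Y3[OF xyz]
    by (simp add: r12_def r23_def R_def e1 e2 e3 e4 b1 b2 g1 g2 bs1 bs2 bt1 bt2 gs1 gs2 gt1 gt2 m_assoc kc1 kc2)
  have n1: "bij_betw (\<lambda>y. fst (R (x, y))) (carrier G) (carrier G)" if x: "x \<in> carrier G" for x
  proof -
    have "bij_betw (\<lambda>y. \<sigma> x y \<otimes> \<beta> x y) (carrier G) (carrier G)"
      by (rule nd_tw[where c="\<beta> x"]) (use x nd1 e2 b2 bs2 in auto)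
    thus ?thesis by (simp add: R_def)
  qed
  have n2: "bij_betw (\<lambda>x. snd (R (x, y))) (carrier G) (carrier G)" if y: "y \<in> carrier G" for y
  proof -
    have "bij_betw (\<lambda>x. \<tau> y x \<otimes> \<gamma> x y) (carrier G) (carrier G)"
      by (rule nd_tw[where c="\<lambda>w. \<gamma> w y"]) (use y nd2 e4 g1 gt1 in auto)
    thus ?thesis by (simp add: R_def)
  qed
  show ?thesis unfolding nondeg_YBE_solution_def YBE_solution_def nondegenerate_def R_def[symmetric]
    using bijR ybe n1 n2 by auto
qed

end


context yb begin
context fixes \<alpha> assumes al: "\<alpha> \<in> bilin_maps G K"
begin
lemma alK[simp]: "a \<in> carrier G \<Longrightarrow> b \<in> carrier G \<Longrightarrow> \<alpha> a b \<in> K" using al by (simp add: bilin_maps_def)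
lemma alKc[simp]: "a \<in> carrier G \<Longrightarrow> b \<in> carrier G \<Longrightarrow> \<alpha> a b \<in> carrier G" using KG by simp
lemma alm1[simp]: "a \<in> carrier G \<Longrightarrow> b \<in> carrier G \<Longrightarrow> w \<in> carrier G \<Longrightarrow> \<alpha> (a \<otimes> b) w = \<alpha> a w \<otimes> \<alpha> b w"
  using al by (simp add: bilin_maps_def)
lemma alm2[simp]: "a \<in> carrier G \<Longrightarrow> b \<in> carrier G \<Longrightarrow> w \<in> carrier G \<Longrightarrow> \<alpha> w (a \<otimes> b) = \<alpha> w a \<otimes> \<alpha> w b"
  using al by (simp add: bilin_maps_def)
lemma alK1[simp]: "k \<in> K \<Longrightarrow> w \<in> carrier G \<Longrightarrow> \<alpha> k w = \<one>"
  using al by (simp add: bilin_maps_def)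
lemma alK2[simp]: "k \<in> K \<Longrightarrow> w \<in> carrier G \<Longrightarrow> \<alpha> w k = \<one>"
  using al by (simp add: bilin_maps_def)
lemma ali1[simp]: "a \<in> carrier G \<Longrightarrow> w \<in> carrier G \<Longrightarrow> \<alpha> (inv a) w = inv (\<alpha> a w)"
proof -
  assume a: "a \<in> carrier G" "w \<in> carrier G"
  have "\<alpha> (inv a) w \<otimes> \<alpha> a w = \<one>" using a alm1[of "inv a" a w] alK1[OF K_one, of w] by simp
  then show ?thesis using a by (simp add: inv_equality)
qed
lemma ali2[simp]: "a \<in> carrier G \<Longrightarrow> w \<in> carrier G \<Longrightarrow> \<alpha> w (inv a) = inv (\<alpha> w a)"
proof -
  assume a: "a \<in> carrier G" "w \<in> carrier G"
  have "\<alpha> w (inv a) \<otimes> \<alpha> w a = \<one>" using a alm2[of "inv a" a w] alK2[OF K_one, of w] by simp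
  then show ?thesis using a by (simp add: inv_equality)
qed
lemma kcanc1[simp]: "k \<in> K \<Longrightarrow> r \<in> carrier G \<Longrightarrow> inv k \<otimes> (r \<otimes> k) = r"
  using Kc[of k r, symmetric] KG[of k] by simp
lemma kcanc2[simp]: "k \<in> K \<Longrightarrow> r \<in> carrier G \<Longrightarrow> k \<otimes> (r \<otimes> inv k) = r"
  using Kc[of "inv k" r, symmetric] KG[of k] K_inv[of k] by simp
lemma alC1[simp]: "p \<in> carrier G \<Longrightarrow> a \<in> carrier G \<Longrightarrow> w \<in> carrier G \<Longrightarrow> \<alpha> (C p a) w = \<alpha> a w"
  by (simp add: C_def m_assoc)
lemma alC2[simp]: "p \<in> carrier G \<Longrightarrow> a \<in> carrier G \<Longrightarrow> w \<in> carrier G \<Longrightarrow> \<alpha> w (C p a) = \<alpha> w a"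
  by (simp add: C_def m_assoc)

lemmas AL = SC gs kc1 kc2 alK

lemma A1: assumes "u \<in> carrier G" "v \<in> carrier G" "w \<in> carrier G"
  shows "\<alpha> (s1 u v) w = \<alpha> v w" "\<alpha> w (s1 u v) = \<alpha> w v" "\<alpha> (t1 v u) w = \<alpha> u w" "\<alpha> w (t1 v u) = \<alpha> w u"
  using assms Pc by (simp_all add: AL)
lemma A2: assumes "u \<in> carrier G" "v \<in> carrier G" "w \<in> carrier G"
  shows "\<alpha> (s2 u v) w = \<alpha> v w" "\<alpha> w (s2 u v) = \<alpha> w v" "\<alpha> (t2 v u) w = \<alpha> u w" "\<alpha> w (t2 v u) = \<alpha> w u"
  using assms Pc by (simp_all add: AL)
lemma A3: assumes "u \<in> carrier G" "v \<in> carrier G" "w \<in> carrier G"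
  shows "\<alpha> (s3 u v) w = \<alpha> v w" "\<alpha> w (s3 u v) = \<alpha> w v" "\<alpha> (t3 v u) w = \<alpha> u w" "\<alpha> w (t3 v u) = \<alpha> w u"
  using assms Pc by (simp_all add: AL)
lemma A4: assumes "u \<in> carrier G" "v \<in> carrier G" "w \<in> carrier G"
  shows "\<alpha> (s4 u v) w = \<alpha> v w" "\<alpha> w (s4 u v) = \<alpha> w v" "\<alpha> (t4 v u) w = \<alpha> u w" "\<alpha> w (t4 v u) = \<alpha> w u"
  using assms Pc by (simp_all add: AL)
end
end


context yb begin
lemma sc1: "u \<in> carrier G \<Longrightarrow> v \<in> carrier G \<Longrightarrow> s1 u v \<in> carrier G" using Pc by (simp add: s1_def)
lemma sc2: "u \<in> carrier G \<Longrightarrow> v \<in> carrier G \<Longrightarrow> s2 u v \<in> carrier G" using Pc by (simp add: s2_def)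
lemma sc3: "u \<in> carrier G \<Longrightarrow> v \<in> carrier G \<Longrightarrow> s3 u v \<in> carrier G" using Pc by (simp add: s3_def)
lemma sc4: "u \<in> carrier G \<Longrightarrow> v \<in> carrier G \<Longrightarrow> s4 u v \<in> carrier G" using Pc by (simp add: s4_def)
lemma tc1: "u \<in> carrier G \<Longrightarrow> v \<in> carrier G \<Longrightarrow> t1 u v \<in> carrier G" using Pc by (simp add: t1_def)
lemma tc2: "u \<in> carrier G \<Longrightarrow> v \<in> carrier G \<Longrightarrow> t2 u v \<in> carrier G" using Pc by (simp add: t2_def)
lemma tc3: "u \<in> carrier G \<Longrightarrow> v \<in> carrier G \<Longrightarrow> t3 u v \<in> carrier G" using Pc by (simp add: t3_def)
lemma tc4: "u \<in> carrier G \<Longrightarrow> v \<in> carrier G \<Longrightarrow> t4 u v \<in> carrier G" using Pc by (simp add: t4_def)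

context fixes \<alpha> assumes al: "\<alpha> \<in> bilin_maps G K"
begin

lemma bij0_1: "bij_betw (\<lambda>(u, v). (s1 u v, t1 v u)) (carrier G \<times> carrier G) (carrier G \<times> carrier G)"
proof (rule bij_betw_byWitness[where f'="\<lambda>(u, v). (s2 u v, t2 v u)"])
  show "\<forall>a\<in>carrier G \<times> carrier G. (\<lambda>(u, v). (s2 u v, t2 v u)) ((\<lambda>(u, v). (s1 u v, t1 v u)) a) = a"
    using inv12 by auto
  show "\<forall>a\<in>carrier G \<times> carrier G. (\<lambda>(u, v). (s1 u v, t1 v u)) ((\<lambda>(u, v). (s2 u v, t2 v u)) a) = a"
    using inv21 by auto
  show "(\<lambda>(u, v). (s1 u v, t1 v u)) ` (carrier G \<times> carrier G) \<subseteq> carrier G \<times> carrier G"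
    using sc1 tc1 by auto
  show "(\<lambda>(u, v). (s2 u v, t2 v u)) ` (carrier G \<times> carrier G) \<subseteq> carrier G \<times> carrier G"
    using sc2 tc2 by auto
qed

lemma ndA_1: "x \<in> carrier G \<Longrightarrow> bij_betw (s1 x) (carrier G) (carrier G)"
  by (rule bij_betw_byWitness[where f'="\<lambda>t. C (inv (P x)) t"]) (use Pc nd1a sc1 in auto)
lemma ndB_1: "y \<in> carrier G \<Longrightarrow> bij_betw (\<lambda>x. t1 y x) (carrier G) (carrier G)"
  by (rule bij_betw_byWitness[where f'="\<lambda>t. C (P t) y \<otimes> C (P y) t \<otimes> inv (C (P t) y)"]) (use Pc nd1b nd1c tc1 in auto)

lemma inst1: "nondeg_YBE_solution (carrier G) (\<lambda>(u, v). (s1 u v \<otimes> \<alpha> u v, t1 v u \<otimes> \<alpha> (inv v) u))"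
proof (rule twist)
  show "\<And>u v. u \<in> carrier G \<Longrightarrow> v \<in> carrier G \<Longrightarrow> s1 u v \<in> carrier G" using Pc by (simp add: s1_def)
  show "\<And>u v. u \<in> carrier G \<Longrightarrow> v \<in> carrier G \<Longrightarrow> t1 v u \<in> carrier G" using Pc by (simp add: t1_def)
  show "\<And>x y z. x \<in> carrier G \<Longrightarrow> y \<in> carrier G \<Longrightarrow> z \<in> carrier G \<Longrightarrow>
       s1 (s1 x y) (s1 (t1 y x) z) = s1 x (s1 y z)" by (rule ybe1a)
  show "\<And>x y z. x \<in> carrier G \<Longrightarrow> y \<in> carrier G \<Longrightarrow> z \<in> carrier G \<Longrightarrow>
       t1 (s1 (t1 y x) z) (s1 x y) = s1 (t1 (s1 y z) x) (t1 z y)" by (rule ybe1b)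
  show "\<And>x y z. x \<in> carrier G \<Longrightarrow> y \<in> carrier G \<Longrightarrow> z \<in> carrier G \<Longrightarrow>
       t1 z (t1 y x) = t1 (t1 z y) (t1 (s1 y z) x)" by (rule ybe1c)
  show "bij_betw (\<lambda>(u, v). (s1 u v, t1 v u)) (carrier G \<times> carrier G) (carrier G \<times> carrier G)" by (rule bij0_1)
  show "\<And>x. x \<in> carrier G \<Longrightarrow> bij_betw (s1 x) (carrier G) (carrier G)" by (rule ndA_1)
  show "\<And>y. y \<in> carrier G \<Longrightarrow> bij_betw (\<lambda>x. t1 y x) (carrier G) (carrier G)" by (rule ndB_1)
  show "\<And>u v k. u \<in> carrier G \<Longrightarrow> v \<in> carrier G \<Longrightarrow> k \<in> K \<Longrightarrow> s1 (u \<otimes> k) v = s1 u v"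
    using eqv1 by (simp add: M_def)
  show "\<And>u v k. u \<in> carrier G \<Longrightarrow> v \<in> carrier G \<Longrightarrow> k \<in> K \<Longrightarrow> s1 u (v \<otimes> k) = s1 u v \<otimes> k"
    using eqv2 by (simp add: M_def)
  show "\<And>u v k. u \<in> carrier G \<Longrightarrow> v \<in> carrier G \<Longrightarrow> k \<in> K \<Longrightarrow> t1 (v \<otimes> k) u = t1 v u"
    using eqv3 by (simp add: M_def)
  show "\<And>u v k. u \<in> carrier G \<Longrightarrow> v \<in> carrier G \<Longrightarrow> k \<in> K \<Longrightarrow> t1 v (u \<otimes> k) = t1 v u \<otimes> k"
    using eqv4 by (simp add: M_def)
qed (use al A1[OF al] KG K_inv sc1 tc1 in \<open>simp_all add: alK[OF al] alm1[OF al] alm2[OF al] ali1[OF al] ali2[OF al] alK1[OF al] alK2[OF al]\<close>)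


lemma bij0_2: "bij_betw (\<lambda>(u, v). (s2 u v, t2 v u)) (carrier G \<times> carrier G) (carrier G \<times> carrier G)"
proof (rule bij_betw_byWitness[where f'="\<lambda>(u, v). (s1 u v, t1 v u)"])
  show "\<forall>a\<in>carrier G \<times> carrier G. (\<lambda>(u, v). (s1 u v, t1 v u)) ((\<lambda>(u, v). (s2 u v, t2 v u)) a) = a"
    using inv21 by auto
  show "\<forall>a\<in>carrier G \<times> carrier G. (\<lambda>(u, v). (s2 u v, t2 v u)) ((\<lambda>(u, v). (s1 u v, t1 v u)) a) = a"
    using inv12 by auto
  show "(\<lambda>(u, v). (s2 u v, t2 v u)) ` (carrier G \<times> carrier G) \<subseteq> carrier G \<times> carrier G"
    using sc2 tc2 by auto
  show "(\<lambda>(u, v). (s1 u v, t1 v u)) ` (carrier G \<times> carrier G) \<subseteq> carrier G \<times> carrier G"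
    using sc1 tc1 by auto
qed

lemma ndA_2: "x \<in> carrier G \<Longrightarrow> bij_betw (s2 x) (carrier G) (carrier G)"
  by (rule bij_betw_byWitness[where f'="\<lambda>t. C (inv (P x)) (inv x \<otimes> t \<otimes> x)"]) (use Pc nd2a sc2 in auto)
lemma ndB_2: "y \<in> carrier G \<Longrightarrow> bij_betw (\<lambda>x. t2 y x) (carrier G) (carrier G)"
  by (rule bij_betw_byWitness[where f'="\<lambda>t. C (P y) t"]) (use Pc nd2b nd2b tc2 in auto)

lemma inst2: "nondeg_YBE_solution (carrier G) (\<lambda>(u, v). (s2 u v \<otimes> \<alpha> u v, t2 v u \<otimes> \<alpha> (inv v) u))"
proof (rule twist)
  show "\<And>u v. u \<in> carrier G \<Longrightarrow> v \<in> carrier G \<Longrightarrow> s2 u v \<in> carrier G" using Pc by (simp add: s2_def)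
  show "\<And>u v. u \<in> carrier G \<Longrightarrow> v \<in> carrier G \<Longrightarrow> t2 v u \<in> carrier G" using Pc by (simp add: t2_def)
  show "\<And>x y z. x \<in> carrier G \<Longrightarrow> y \<in> carrier G \<Longrightarrow> z \<in> carrier G \<Longrightarrow>
       s2 (s2 x y) (s2 (t2 y x) z) = s2 x (s2 y z)" by (rule ybe2a)
  show "\<And>x y z. x \<in> carrier G \<Longrightarrow> y \<in> carrier G \<Longrightarrow> z \<in> carrier G \<Longrightarrow>
       t2 (s2 (t2 y x) z) (s2 x y) = s2 (t2 (s2 y z) x) (t2 z y)" by (rule ybe2b)
  show "\<And>x y z. x \<in> carrier G \<Longrightarrow> y \<in> carrier G \<Longrightarrow> z \<in> carrier G \<Longrightarrow>
       t2 z (t2 y x) = t2 (t2 z y) (t2 (s2 y z) x)" by (rule ybe2c)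
  show "bij_betw (\<lambda>(u, v). (s2 u v, t2 v u)) (carrier G \<times> carrier G) (carrier G \<times> carrier G)" by (rule bij0_2)
  show "\<And>x. x \<in> carrier G \<Longrightarrow> bij_betw (s2 x) (carrier G) (carrier G)" by (rule ndA_2)
  show "\<And>y. y \<in> carrier G \<Longrightarrow> bij_betw (\<lambda>x. t2 y x) (carrier G) (carrier G)" by (rule ndB_2)
  show "\<And>u v k. u \<in> carrier G \<Longrightarrow> v \<in> carrier G \<Longrightarrow> k \<in> K \<Longrightarrow> s2 (u \<otimes> k) v = s2 u v"
    using eqv5 by (simp add: M_def)
  show "\<And>u v k. u \<in> carrier G \<Longrightarrow> v \<in> carrier G \<Longrightarrow> k \<in> K \<Longrightarrow> s2 u (v \<otimes> k) = s2 u v \<otimes> k"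
    using eqv6 by (simp add: M_def)
  show "\<And>u v k. u \<in> carrier G \<Longrightarrow> v \<in> carrier G \<Longrightarrow> k \<in> K \<Longrightarrow> t2 (v \<otimes> k) u = t2 v u"
    using eqv7 by (simp add: M_def)
  show "\<And>u v k. u \<in> carrier G \<Longrightarrow> v \<in> carrier G \<Longrightarrow> k \<in> K \<Longrightarrow> t2 v (u \<otimes> k) = t2 v u \<otimes> k"
    using eqv8 by (simp add: M_def)
qed (use al A2[OF al] KG K_inv sc2 tc2 in \<open>simp_all add: alK[OF al] alm1[OF al] alm2[OF al] ali1[OF al] ali2[OF al] alK1[OF al] alK2[OF al]\<close>)


lemma bij0_3: "bij_betw (\<lambda>(u, v). (s3 u v, t3 v u)) (carrier G \<times> carrier G) (carrier G \<times> carrier G)"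
proof (rule bij_betw_byWitness[where f'="\<lambda>(u, v). (s4 u v, t4 v u)"])
  show "\<forall>a\<in>carrier G \<times> carrier G. (\<lambda>(u, v). (s4 u v, t4 v u)) ((\<lambda>(u, v). (s3 u v, t3 v u)) a) = a"
    using inv34 by auto
  show "\<forall>a\<in>carrier G \<times> carrier G. (\<lambda>(u, v). (s3 u v, t3 v u)) ((\<lambda>(u, v). (s4 u v, t4 v u)) a) = a"
    using inv43 by auto
  show "(\<lambda>(u, v). (s3 u v, t3 v u)) ` (carrier G \<times> carrier G) \<subseteq> carrier G \<times> carrier G"
    using sc3 tc3 by auto
  show "(\<lambda>(u, v). (s4 u v, t4 v u)) ` (carrier G \<times> carrier G) \<subseteq> carrier G \<times> carrier G"
    using sc4 tc4 by auto
qed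

lemma ndA_3: "x \<in> carrier G \<Longrightarrow> bij_betw (s3 x) (carrier G) (carrier G)"
  by (rule bij_betw_byWitness[where f'="\<lambda>t. C (P x) t"]) (use Pc nd3a sc3 in auto)
lemma ndB_3: "y \<in> carrier G \<Longrightarrow> bij_betw (\<lambda>x. t3 y x) (carrier G) (carrier G)"
  by (rule bij_betw_byWitness[where f'="\<lambda>t. C (inv (P t)) y \<otimes> t \<otimes> inv y"]) (use Pc nd3b nd3c tc3 in auto)

lemma inst3: "nondeg_YBE_solution (carrier G) (\<lambda>(u, v). (s3 u v \<otimes> \<alpha> (inv u) v, t3 v u \<otimes> \<alpha> u v))"
proof (rule twist)
  show "\<And>u v. u \<in> carrier G \<Longrightarrow> v \<in> carrier G \<Longrightarrow> s3 u v \<in> carrier G" using Pc by (simp add: s3_def)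
  show "\<And>u v. u \<in> carrier G \<Longrightarrow> v \<in> carrier G \<Longrightarrow> t3 v u \<in> carrier G" using Pc by (simp add: t3_def)
  show "\<And>x y z. x \<in> carrier G \<Longrightarrow> y \<in> carrier G \<Longrightarrow> z \<in> carrier G \<Longrightarrow>
       s3 (s3 x y) (s3 (t3 y x) z) = s3 x (s3 y z)" by (rule ybe3a)
  show "\<And>x y z. x \<in> carrier G \<Longrightarrow> y \<in> carrier G \<Longrightarrow> z \<in> carrier G \<Longrightarrow>
       t3 (s3 (t3 y x) z) (s3 x y) = s3 (t3 (s3 y z) x) (t3 z y)" by (rule ybe3b)
  show "\<And>x y z. x \<in> carrier G \<Longrightarrow> y \<in> carrier G \<Longrightarrow> z \<in> carrier G \<Longrightarrow>
       t3 z (t3 y x) = t3 (t3 z y) (t3 (s3 y z) x)" by (rule ybe3c)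
  show "bij_betw (\<lambda>(u, v). (s3 u v, t3 v u)) (carrier G \<times> carrier G) (carrier G \<times> carrier G)" by (rule bij0_3)
  show "\<And>x. x \<in> carrier G \<Longrightarrow> bij_betw (s3 x) (carrier G) (carrier G)" by (rule ndA_3)
  show "\<And>y. y \<in> carrier G \<Longrightarrow> bij_betw (\<lambda>x. t3 y x) (carrier G) (carrier G)" by (rule ndB_3)
  show "\<And>u v k. u \<in> carrier G \<Longrightarrow> v \<in> carrier G \<Longrightarrow> k \<in> K \<Longrightarrow> s3 (u \<otimes> k) v = s3 u v"
    using eqv9 by (simp add: M_def)
  show "\<And>u v k. u \<in> carrier G \<Longrightarrow> v \<in> carrier G \<Longrightarrow> k \<in> K \<Longrightarrow> s3 u (v \<otimes> k) = s3 u v \<otimes> k"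
    using eqv10 by (simp add: M_def)
  show "\<And>u v k. u \<in> carrier G \<Longrightarrow> v \<in> carrier G \<Longrightarrow> k \<in> K \<Longrightarrow> t3 (v \<otimes> k) u = t3 v u"
    using eqv11 by (simp add: M_def)
  show "\<And>u v k. u \<in> carrier G \<Longrightarrow> v \<in> carrier G \<Longrightarrow> k \<in> K \<Longrightarrow> t3 v (u \<otimes> k) = t3 v u \<otimes> k"
    using eqv12 by (simp add: M_def)
qed (use al A3[OF al] KG K_inv sc3 tc3 in \<open>simp_all add: alK[OF al] alm1[OF al] alm2[OF al] ali1[OF al] ali2[OF al] alK1[OF al] alK2[OF al]\<close>)


lemma bij0_4: "bij_betw (\<lambda>(u, v). (s4 u v, t4 v u)) (carrier G \<times> carrier G) (carrier G \<times> carrier G)"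
proof (rule bij_betw_byWitness[where f'="\<lambda>(u, v). (s3 u v, t3 v u)"])
  show "\<forall>a\<in>carrier G \<times> carrier G. (\<lambda>(u, v). (s3 u v, t3 v u)) ((\<lambda>(u, v). (s4 u v, t4 v u)) a) = a"
    using inv43 by auto
  show "\<forall>a\<in>carrier G \<times> carrier G. (\<lambda>(u, v). (s4 u v, t4 v u)) ((\<lambda>(u, v). (s3 u v, t3 v u)) a) = a"
    using inv34 by auto
  show "(\<lambda>(u, v). (s4 u v, t4 v u)) ` (carrier G \<times> carrier G) \<subseteq> carrier G \<times> carrier G"
    using sc4 tc4 by auto
  show "(\<lambda>(u, v). (s3 u v, t3 v u)) ` (carrier G \<times> carrier G) \<subseteq> carrier G \<times> carrier G"
    using sc3 tc3 by auto
qed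

lemma ndA_4: "x \<in> carrier G \<Longrightarrow> bij_betw (s4 x) (carrier G) (carrier G)"
  by (rule bij_betw_byWitness[where f'="\<lambda>t. inv x \<otimes> t \<otimes> C (P t) x"]) (use Pc nd4a nd4b sc4 in auto)
lemma ndB_4: "y \<in> carrier G \<Longrightarrow> bij_betw (\<lambda>x. t4 y x) (carrier G) (carrier G)"
  by (rule bij_betw_byWitness[where f'="\<lambda>t. C (inv (P y)) t"]) (use Pc nd4c nd4c tc4 in auto)

lemma inst4: "nondeg_YBE_solution (carrier G) (\<lambda>(u, v). (s4 u v \<otimes> \<alpha> v (inv u), t4 v u \<otimes> \<alpha> v u))"
proof (rule twist)
  show "\<And>u v. u \<in> carrier G \<Longrightarrow> v \<in> carrier G \<Longrightarrow> s4 u v \<in> carrier G" using Pc by (simp add: s4_def)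
  show "\<And>u v. u \<in> carrier G \<Longrightarrow> v \<in> carrier G \<Longrightarrow> t4 v u \<in> carrier G" using Pc by (simp add: t4_def)
  show "\<And>x y z. x \<in> carrier G \<Longrightarrow> y \<in> carrier G \<Longrightarrow> z \<in> carrier G \<Longrightarrow>
       s4 (s4 x y) (s4 (t4 y x) z) = s4 x (s4 y z)" by (rule ybe4a)
  show "\<And>x y z. x \<in> carrier G \<Longrightarrow> y \<in> carrier G \<Longrightarrow> z \<in> carrier G \<Longrightarrow>
       t4 (s4 (t4 y x) z) (s4 x y) = s4 (t4 (s4 y z) x) (t4 z y)" by (rule ybe4b)
  show "\<And>x y z. x \<in> carrier G \<Longrightarrow> y \<in> carrier G \<Longrightarrow> z \<in> carrier G \<Longrightarrow>
       t4 z (t4 y x) = t4 (t4 z y) (t4 (s4 y z) x)" by (rule ybe4c)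
  show "bij_betw (\<lambda>(u, v). (s4 u v, t4 v u)) (carrier G \<times> carrier G) (carrier G \<times> carrier G)" by (rule bij0_4)
  show "\<And>x. x \<in> carrier G \<Longrightarrow> bij_betw (s4 x) (carrier G) (carrier G)" by (rule ndA_4)
  show "\<And>y. y \<in> carrier G \<Longrightarrow> bij_betw (\<lambda>x. t4 y x) (carrier G) (carrier G)" by (rule ndB_4)
  show "\<And>u v k. u \<in> carrier G \<Longrightarrow> v \<in> carrier G \<Longrightarrow> k \<in> K \<Longrightarrow> s4 (u \<otimes> k) v = s4 u v"
    using eqv13 by (simp add: M_def)
  show "\<And>u v k. u \<in> carrier G \<Longrightarrow> v \<in> carrier G \<Longrightarrow> k \<in> K \<Longrightarrow> s4 u (v \<otimes> k) = s4 u v \<otimes> k"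
    using eqv14 by (simp add: M_def)
  show "\<And>u v k. u \<in> carrier G \<Longrightarrow> v \<in> carrier G \<Longrightarrow> k \<in> K \<Longrightarrow> t4 (v \<otimes> k) u = t4 v u"
    using eqv15 by (simp add: M_def)
  show "\<And>u v k. u \<in> carrier G \<Longrightarrow> v \<in> carrier G \<Longrightarrow> k \<in> K \<Longrightarrow> t4 v (u \<otimes> k) = t4 v u \<otimes> k"
    using eqv16 by (simp add: M_def)
qed (use al A4[OF al] KG K_inv sc4 tc4 in \<open>simp_all add: alK[OF al] alm1[OF al] alm2[OF al] ali1[OF al] ali2[OF al] alK1[OF al] alK2[OF al]\<close>)

end
end



context yb begin
lemma yb_main:
  assumes al: "\<alpha> \<in> bilin_maps G K"
  shows
   "nondeg_YBE_solution (carrier G) (\<lambda>(g, h).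
      (P g \<otimes> h \<otimes> inv (P g) \<otimes> \<alpha> g h,
       inv (P h) \<otimes> P g \<otimes> inv h \<otimes> inv (P g) \<otimes> g \<otimes> P g \<otimes> h \<otimes> inv (P g)
         \<otimes> P h \<otimes> \<alpha> (inv h) g))
  \<and> nondeg_YBE_solution (carrier G) (\<lambda>(g, h).
      (g \<otimes> P g \<otimes> h \<otimes> inv (P g) \<otimes> inv g \<otimes> \<alpha> g h,
       inv (P h) \<otimes> g \<otimes> P h \<otimes> \<alpha> (inv h) g))
  \<and> nondeg_YBE_solution (carrier G) (\<lambda>(g, h).
      (inv (P g) \<otimes> h \<otimes> P g \<otimes> \<alpha> (inv g) h,
       inv (P g) \<otimes> inv h \<otimes> P g \<otimes> g \<otimes> h \<otimes> \<alpha> g h))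
  \<and> nondeg_YBE_solution (carrier G) (\<lambda>(g, h).
      (g \<otimes> h \<otimes> P h \<otimes> inv g \<otimes> inv (P h) \<otimes> \<alpha> h (inv g),
       P h \<otimes> g \<otimes> inv (P h) \<otimes> \<alpha> h g))"
  using inst1[OF al] inst2[OF al] inst3[OF al] inst4[OF al]
  by (simp only: s1_def t1_def s2_def t2_def s3_def t3_def s4_def t4_def)
end

lemma coset_K:
  fixes G (structure)
  assumes grp: "group G" and K: "subgroup K G" and Kc: "\<And>k g. k \<in> K \<Longrightarrow> g \<in> carrier G \<Longrightarrow> k \<otimes>\<^bsub>G\<^esub> g = g \<otimes>\<^bsub>G\<^esub> k"
    and x: "x \<in> carrier G" and y: "y \<in> carrier G" and e: "K #>\<^bsub>G\<^esub> x = K #>\<^bsub>G\<^esub> y"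
  shows "inv\<^bsub>G\<^esub> y \<otimes>\<^bsub>G\<^esub> x \<in> K"
proof -
  interpret group G by (rule grp)
  have "x \<in> K #> y" using rcos_self[OF x K] e by simp
  hence k: "x \<otimes> inv y \<in> K" using subgroup.rcos_module_imp[OF K grp y] by simp
  define c where "c = x \<otimes> inv y"
  have c: "c \<in> K" "c \<in> carrier G" using k x y by (auto simp: c_def)
  have "x = c \<otimes> y" using x y by (simp add: c_def m_assoc)
  hence "inv y \<otimes> x = inv y \<otimes> (c \<otimes> y)" by simp
  also have "\<dots> = inv y \<otimes> (y \<otimes> c)" using Kc[OF c(1) y] by simp
  also have "\<dots> = c" using c y by (simp flip: m_assoc)
  finally show ?thesis using c by simp
qed

theorem mainTheorem15:
  fixes G (structure)
    and K A :: "'a set"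
    and \<psi> :: "'a set \<Rightarrow> 'a set"
    and \<psi>u :: "'a \<Rightarrow> 'a"
    and \<alpha> :: "'a \<Rightarrow> 'a \<Rightarrow> 'a"
  assumes grp: "group G"
    and K_sub: "subgroup K G"
    and K_centre: "K \<subseteq> group_centre G"
    and A_sub: "subgroup A G"
    and KA: "K \<subseteq> A"
    and A_mod_K_abelian: "comm_group ((G\<lparr>carrier := A\<rparr>) Mod K)"
    and psi: "\<psi> \<in> endo_into G K A"
    and lift: "is_lifting G K A \<psi> \<psi>u"
    and alpha: "\<alpha> \<in> bilin_maps G K"
  shows
   "nondeg_YBE_solution (carrier G) (\<lambda>(g, h).
      (\<psi>u g \<otimes> h \<otimes> inv (\<psi>u g) \<otimes> \<alpha> g h,
       inv (\<psi>u h) \<otimes> \<psi>u g \<otimes> inv h \<otimes> inv (\<psi>u g) \<otimes> g \<otimes> \<psi>u g \<otimes> h \<otimes> inv (\<psi>u g)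
         \<otimes> \<psi>u h \<otimes> \<alpha> (inv h) g))
  \<and> nondeg_YBE_solution (carrier G) (\<lambda>(g, h).
      (g \<otimes> \<psi>u g \<otimes> h \<otimes> inv (\<psi>u g) \<otimes> inv g \<otimes> \<alpha> g h,
       inv (\<psi>u h) \<otimes> g \<otimes> \<psi>u h \<otimes> \<alpha> (inv h) g))
  \<and> nondeg_YBE_solution (carrier G) (\<lambda>(g, h).
      (inv (\<psi>u g) \<otimes> h \<otimes> \<psi>u g \<otimes> \<alpha> (inv g) h,
       inv (\<psi>u g) \<otimes> inv h \<otimes> \<psi>u g \<otimes> g \<otimes> h \<otimes> \<alpha> g h))
  \<and> nondeg_YBE_solution (carrier G) (\<lambda>(g, h).
      (g \<otimes> h \<otimes> \<psi>u h \<otimes> inv g \<otimes> inv (\<psi>u h) \<otimes> \<alpha> h (inv g),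
       \<psi>u h \<otimes> g \<otimes> inv (\<psi>u h) \<otimes> \<alpha> h g))"
proof -
  interpret group G by (rule grp)
  have Kc: "\<And>k g. k \<in> K \<Longrightarrow> g \<in> carrier G \<Longrightarrow> k \<otimes> g = g \<otimes> k"
    using K_centre unfolding group_centre_def by blast
  have AG: "A \<subseteq> carrier G" using A_sub subgroup.subset by blast
  have KG: "K \<subseteq> carrier G" using K_sub subgroup.subset by blast
  have nK: "K \<lhd> G"
  proof (rule normalI[OF K_sub], intro ballI)
    fix x assume x: "x \<in> carrier G"
    show "K #> x = x <# K" unfolding r_coset_def l_coset_def
      by (rule SUP_cong) (simp_all add: Kc[OF _ x])
  qed
  interpret nK: normal K G by (rule nK)
  have hom: "\<psi> \<in> hom (G Mod K) (G Mod K)" using psi by (simp add: endo_into_def)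
  have lf: "\<And>g. g \<in> carrier G \<Longrightarrow> \<psi>u g \<in> A \<and> K #> \<psi>u g = \<psi> (K #> g)"
    using lift by (simp add: is_lifting_def)
  have Pc: "\<And>g. g \<in> carrier G \<Longrightarrow> \<psi>u g \<in> carrier G" using lf AG by blast
  have rc: "\<And>g. g \<in> carrier G \<Longrightarrow> K #> g \<in> carrier (G Mod K)"
    by (simp add: FactGroup_def rcosetsI KG)
  have Pmul: "\<And>a b. a \<in> carrier G \<Longrightarrow> b \<in> carrier G \<Longrightarrow> K #> \<psi>u (a \<otimes> b) = K #> (\<psi>u a \<otimes> \<psi>u b)"
  proof -
    fix a b assume a: "a \<in> carrier G" and b: "b \<in> carrier G"
    have "K #> \<psi>u (a \<otimes> b) = \<psi> (K #> (a \<otimes> b))" using lf a b by simp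
    also have "\<dots> = \<psi> ((K #> a) <#> (K #> b))" using nK.rcos_sum a b by simp
    also have "\<dots> = \<psi> (K #> a) \<otimes>\<^bsub>G Mod K\<^esub> \<psi> (K #> b)"
      using hom_mult[OF hom rc[OF a] rc[OF b]] by (simp add: FactGroup_def)
    also have "\<dots> = (K #> \<psi>u a) <#> (K #> \<psi>u b)" using lf a b by (simp add: FactGroup_def)
    also have "\<dots> = K #> (\<psi>u a \<otimes> \<psi>u b)" using nK.rcos_sum Pc a b by simp
    finally show "K #> \<psi>u (a \<otimes> b) = K #> (\<psi>u a \<otimes> \<psi>u b)" .
  qed
  have rcA: "\<And>a. a \<in> A \<Longrightarrow> K #> a \<in> carrier ((G\<lparr>carrier := A\<rparr>) Mod K)"
    by (auto simp: FactGroup_def RCOSETS_def r_coset_def)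
  have Pcomm: "\<And>a b. a \<in> carrier G \<Longrightarrow> b \<in> carrier G \<Longrightarrow> K #> (\<psi>u a \<otimes> \<psi>u b) = K #> (\<psi>u b \<otimes> \<psi>u a)"
  proof -
    fix a b assume a: "a \<in> carrier G" and b: "b \<in> carrier G"
    have "(K #> \<psi>u a) \<otimes>\<^bsub>(G\<lparr>carrier := A\<rparr>) Mod K\<^esub> (K #> \<psi>u b) = (K #> \<psi>u b) \<otimes>\<^bsub>(G\<lparr>carrier := A\<rparr>) Mod K\<^esub> (K #> \<psi>u a)"
      using comm_monoid.m_comm[OF comm_group.axioms(1)[OF A_mod_K_abelian] rcA rcA] lf a b by blast
    hence "(K #> \<psi>u a) <#> (K #> \<psi>u b) = (K #> \<psi>u b) <#> (K #> \<psi>u a)"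
      by (simp add: FactGroup_def set_mult_def)
    thus "K #> (\<psi>u a \<otimes> \<psi>u b) = K #> (\<psi>u b \<otimes> \<psi>u a)" using nK.rcos_sum Pc a b by simp
  qed
  have PK: "\<And>k. k \<in> K \<Longrightarrow> \<psi>u k \<in> K"
  proof -
    fix k assume k: "k \<in> K"
    have kc: "k \<in> carrier G" using k KG by blast
    have gh: "group_hom (G Mod K) (G Mod K) \<psi>"
      using hom nK.factorgroup_is_group by (simp add: group_hom_def group_hom_axioms_def)
    have "K #> \<psi>u k = \<psi> (K #> k)" using lf kc by simp
    also have "\<dots> = \<psi> K" using coset_join2[OF kc K_sub k] by simp
    also have "\<dots> = K" using group_hom.hom_one[OF gh] by (simp add: FactGroup_def)
    finally have "K #> \<psi>u k = K" .
    thus "\<psi>u k \<in> K" using rcos_self[OF Pc[OF kc] K_sub] by simp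
  qed
  have ax: "yb_axioms G K \<psi>u"
  proof (rule yb_axioms.intro)
    show "subgroup K G" by (rule K_sub)
    show "\<And>k g. k \<in> K \<Longrightarrow> g \<in> carrier G \<Longrightarrow> k \<otimes> g = g \<otimes> k" by (rule Kc)
    show "\<And>g. g \<in> carrier G \<Longrightarrow> \<psi>u g \<in> carrier G" by (rule Pc)
    show "\<And>a b. a \<in> carrier G \<Longrightarrow> b \<in> carrier G \<Longrightarrow> inv (\<psi>u a \<otimes> \<psi>u b) \<otimes> \<psi>u (a \<otimes> b) \<in> K"
      using coset_K[OF grp K_sub Kc] Pmul Pc by simp
    show "\<And>a b. a \<in> carrier G \<Longrightarrow> b \<in> carrier G \<Longrightarrow> inv (\<psi>u b \<otimes> \<psi>u a) \<otimes> (\<psi>u a \<otimes> \<psi>u b) \<in> K"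
      using coset_K[OF grp K_sub Kc] Pcomm Pc by simp
    show "\<And>k. k \<in> K \<Longrightarrow> \<psi>u k \<in> K" by (rule PK)
  qed
  interpret yb G K \<psi>u by (rule yb.intro[OF grp ax])
  show ?thesis by (rule yb_main[OF alpha])
qed



end
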